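(* Let $N\in\mathbb{N}$, $N\geqslant2$, and let $f:[0,1]\times\mathbb{R}\to\mathbb{R}$ be continuous with continuous partial derivative $f_x$ with respect to the second variable, satisfying $\inf_{[0,1]\times\mathbb{R}}f_x>-1$. Then for every $x\in\mathbb{E}_N$ the linear operator $D_N'(x):\mathbb{E}_N\to\mathbb{E}_N$ is invertible.
   Context: $\mathbb{E}_N$ is the space of $x:\{0,\dots,N\}\to\mathbb{R}$ with $x(0)=x(N)=0$. $\Delta x(k-1)=x(k)-x(k-1)$, $\Delta^2x(k-1)=x(k+1)-2x(k)+x(k-1)$. $D_N:\mathbb{E}_N\to\mathbb{E}_N$ is $(D_Nx)(k)=\Delta^2x(k-1)-\frac{1}{N^2}f(\frac kN,x(k))$ for $k=1,\dots,N-1$, $(D_Nx)(0)=(D_Nx)(N)=0$; its derivative at $x$ is $D_N'(x)h(k)=\Delta^2h(k-1)-\frac{1}{N^2}f_x(\frac kN,x(k))h(k)$ for $k=1,\dots,N-1$ and $0$ at $k=0,N$. *)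

theory Defs
  imports "HOL-Analysis.Analysis"
begin

text \<open>The space E_N: functions on {0..N} (represented as nat => real, zero beyond N)
  vanishing at 0 and N.\<close>
definition EN :: "nat \<Rightarrow> (nat \<Rightarrow> real) set" where
  "EN N = {x. x 0 = 0 \<and> x N = 0 \<and> (\<forall>k>N. x k = 0)}"

text \<open>Second difference: Delta^2 x(k-1) = x(k+1) - 2 x(k) + x(k-1).\<close>
definition D2 :: "(nat \<Rightarrow> real) \<Rightarrow> nat \<Rightarrow> real" where
  "D2 x k = x (k + 1) - 2 * x k + x (k - 1)"

definition DN :: "(real \<Rightarrow> real \<Rightarrow> real) \<Rightarrow> nat \<Rightarrow> (nat \<Rightarrow> real) \<Rightarrow> (nat \<Rightarrow> real)" where
  "DN f N x = (\<lambda>k. if 1 \<le> k \<and> k \<le> N - 1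
      then D2 x k - f (real k / real N) (x k) / (real N)^2 else 0)"

text \<open>The derivative D_N'(x), where fx is the partial derivative of f w.r.t. its second argument.\<close>
definition DN' :: "(real \<Rightarrow> real \<Rightarrow> real) \<Rightarrow> nat \<Rightarrow> (nat \<Rightarrow> real) \<Rightarrow> (nat \<Rightarrow> real) \<Rightarrow> (nat \<Rightarrow> real)" where
  "DN' fx N x h = (\<lambda>k. if 1 \<le> k \<and> k \<le> N - 1
      then D2 h k - fx (real k / real N) (x k) * h k / (real N)^2 else 0)"

end

theory Submission
  imports Defs
begin

lemma cs_sum:
  fixes d :: "nat \<Rightarrow> real"
  shows "(\<Sum>j<k. d j)^2 \<le> real k * (\<Sum>j<k. (d j)^2)"
proof (induction k)
  case 0
  then show ?case by simp
next
  case (Suc k)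
  define a where "a = (\<Sum>j<k. d j)"
  define Q where "Q = (\<Sum>j<k. (d j)^2)"
  have IH: "a^2 \<le> real k * Q" using Suc a_def Q_def by simp
  have Q0: "Q \<ge> 0" unfolding Q_def by (simp add: sum_nonneg)
  have key: "2 * a * d k \<le> Q + real k * (d k)^2"
  proof (cases "k = 0")
    case True
    then have "a = 0" unfolding a_def by simp
    then show ?thesis using Q0 by simp
  next
    case False
    then have kp: "real k > 0" by simp
    have "0 \<le> (a - real k * d k)^2" by simp
    then have "2 * a * real k * d k \<le> a^2 + (real k)^2 * (d k)^2"
      by (simp add: power2_eq_square algebra_simps)
    also have "\<dots> \<le> real k * Q + (real k)^2 * (d k)^2" using IH by simp
    finally have "real k * (2 * a * d k) \<le> real k * (Q + real k * (d k)^2)"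
      by (simp add: power2_eq_square algebra_simps)
    then show ?thesis using kp by simp
  qed
  have "(\<Sum>j<Suc k. d j)^2 = a^2 + 2 * a * d k + (d k)^2"
    by (simp add: a_def power2_eq_square algebra_simps)
  also have "\<dots> \<le> real k * Q + Q + real k * (d k)^2 + (d k)^2" using IH key by simp
  also have "\<dots> = real (Suc k) * (\<Sum>j<Suc k. (d j)^2)" by (simp add: Q_def algebra_simps)
  finally show ?case .
qed

lemma telescope:
  fixes h :: "nat \<Rightarrow> real"
  assumes "h 0 = 0"
  shows "h k = (\<Sum>j<k. h (Suc j) - h j)"
  using assms by (induction k) auto

lemma point_bound:
  fixes h :: "nat \<Rightarrow> real"
  assumes "h 0 = 0" and "k \<le> N"
  shows "(h k)^2 \<le> real k * (\<Sum>j<N. (h (Suc j) - h j)^2)"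
proof -
  have "(h k)^2 \<le> real k * (\<Sum>j<k. (h (Suc j) - h j)^2)"
    using cs_sum[of "\<lambda>j. h (Suc j) - h j" k] telescope[of h, OF assms(1), of k] by simp
  also have "\<dots> \<le> real k * (\<Sum>j<N. (h (Suc j) - h j)^2)"
    by (rule mult_left_mono) (auto intro!: sum_mono2 simp: assms(2))
  finally show ?thesis .
qed

lemma sum_parts:
  fixes h :: "nat \<Rightarrow> real"
  assumes "h 0 = 0"
  shows "(\<Sum>k=1..n. h k * D2 h k) = h n * (h (Suc n) - h n) - (\<Sum>k<n. (h (Suc k) - h k)^2)"
proof (induction n)
  case 0
  then show ?case using assms by simp
next
  case (Suc n)
  have "(\<Sum>k=1..Suc n. h k * D2 h k) = (\<Sum>k=1..n. h k * D2 h k) + h (Suc n) * D2 h (Suc n)"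
    by simp
  also have "\<dots> = h n * (h (Suc n) - h n) - (\<Sum>k<n. (h (Suc k) - h k)^2)
      + h (Suc n) * (h (Suc (Suc n)) - 2 * h (Suc n) + h n)"
    using Suc by (simp add: D2_def)
  also have "\<dots> = h (Suc n) * (h (Suc (Suc n)) - h (Suc n)) - (\<Sum>k<Suc n. (h (Suc k) - h k)^2)"
    by (simp add: power2_eq_square algebra_simps)
  finally show ?case .
qed

lemma energy:
  fixes h :: "nat \<Rightarrow> real"
  assumes "h 0 = 0" "h N = 0" "N \<ge> 1"
  shows "(\<Sum>k=1..N-1. h k * D2 h k) = - (\<Sum>k<N. (h (Suc k) - h k)^2)"
proof -
  obtain m where m: "N = Suc m" using assms(3) by (cases N) auto
  have "(\<Sum>k=1..N-1. h k * D2 h k) = h m * (h N - h m) - (\<Sum>k<m. (h (Suc k) - h k)^2)"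
    using sum_parts[of h, OF assms(1), of m] m by simp
  also have "\<dots> = - (\<Sum>k<N. (h (Suc k) - h k)^2)"
    using m assms(2) by (simp add: power2_eq_square algebra_simps)
  finally show ?thesis .
qed

lemma kernel_zero:
  fixes h c :: "nat \<Rightarrow> real"
  assumes N: "N \<ge> 2" and h: "h \<in> EN N"
    and c: "\<And>k. 1 \<le> k \<Longrightarrow> k \<le> N - 1 \<Longrightarrow> c k > -1"
    and eq: "\<And>k. 1 \<le> k \<Longrightarrow> k \<le> N - 1 \<Longrightarrow> D2 h k - c k * h k / (real N)^2 = 0"
  shows "h = (\<lambda>_. 0)"
proof -
  have h0: "h 0 = 0" and hN: "h N = 0" and hb: "\<And>k. k > N \<Longrightarrow> h k = 0"
    using h by (auto simp: EN_def)
  define S where "S = (\<Sum>k<N. (h (Suc k) - h k)^2)"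
  have Npos: "real N > 0" using N by simp
  have NN: "(real N)^2 > 0" using Npos by simp
  have "(\<Sum>k=1..N-1. h k * D2 h k) = - S" using energy[of h, OF h0 hN] N S_def by simp
  moreover have "(\<Sum>k=1..N-1. h k * D2 h k) = (\<Sum>k=1..N-1. c k * (h k)^2 / (real N)^2)"
  proof (rule sum.cong)
    fix k assume "k \<in> {1..N-1}"
    then have "D2 h k = c k * h k / (real N)^2" using eq[of k] by simp
    then show "h k * D2 h k = c k * (h k)^2 / (real N)^2" by (simp add: power2_eq_square)
  qed simp
  ultimately have e1: "(\<Sum>k=1..N-1. c k * (h k)^2) = - ((real N)^2 * S)"
    using NN by (simp add: sum_divide_distrib[symmetric] field_simps)
  have "(\<Sum>k=1..N-1. (h k)^2) \<le> (\<Sum>k=1..N-1. real N * S)"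
  proof (rule sum_mono)
    fix k assume k: "k \<in> {1..N-1}"
    have kN: "k \<le> N" using k by auto
    have "(h k)^2 \<le> real k * S" using point_bound[of h, OF h0 kN] S_def by simp
    also have "\<dots> \<le> real N * S" using k by (intro mult_right_mono) (auto simp: S_def sum_nonneg)
    finally show "(h k)^2 \<le> real N * S" .
  qed
  also have "\<dots> = real (N-1) * real N * S" by simp
  also have "\<dots> \<le> (real N)^2 * S"
    by (intro mult_right_mono) (auto simp: S_def sum_nonneg power2_eq_square intro!: mult_right_mono)
  finally have e2: "(\<Sum>k=1..N-1. (h k)^2) \<le> (real N)^2 * S" .
  have sum0: "(\<Sum>k=1..N-1. (1 + c k) * (h k)^2) \<le> 0"
    using e1 e2 by (simp add: algebra_simps sum.distrib)
  have nn: "\<And>k. k \<in> {1..N-1} \<Longrightarrow> (1 + c k) * (h k)^2 \<ge> 0"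
  proof -
    fix k assume "k \<in> {1..N-1}"
    then have "c k > -1" by (intro c) auto
    then show "(1 + c k) * (h k)^2 \<ge> 0" by simp
  qed
  have all0: "\<And>k. k \<in> {1..N-1} \<Longrightarrow> (1 + c k) * (h k)^2 = 0"
  proof -
    have "(\<Sum>k=1..N-1. (1 + c k) * (h k)^2) = 0" using sum0 nn by (meson antisym sum_nonneg)
    then show "\<And>k. k \<in> {1..N-1} \<Longrightarrow> (1 + c k) * (h k)^2 = 0"
      using sum_nonneg_eq_0_iff[of "{1..N-1}" "\<lambda>k. (1 + c k) * (h k)^2"] nn by auto
  qed
  show ?thesis
  proof
    fix k
    show "h k = 0"
    proof (cases "k \<in> {1..N-1}")
      case True
      have "c k > -1" using True by (intro c) auto
      then have "1 + c k > 0" by simp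
      then show ?thesis using all0[OF True] by simp
    next
      case False
      then have "k = 0 \<or> k = N \<or> k > N" by auto
      then show ?thesis using h0 hN hb by auto
    qed
  qed
qed

fun shoot :: "(nat \<Rightarrow> real) \<Rightarrow> real \<Rightarrow> (nat \<Rightarrow> real) \<Rightarrow> real \<Rightarrow> nat \<Rightarrow> real" where
  "shoot c M g s 0 = 0"
| "shoot c M g s (Suc 0) = s"
| "shoot c M g s (Suc (Suc k)) = 2 * shoot c M g s (Suc k) - shoot c M g s k
     + c (Suc k) * shoot c M g s (Suc k) / M + g (Suc k)"

lemma shoot_lin: "shoot c M g s k = s * shoot c M (\<lambda>_. 0) 1 k + shoot c M g 0 k"
  by (induction c M g s k rule: shoot.induct) (auto simp: algebra_simps add_divide_distrib)

lemma shoot_eq: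
  assumes "k \<ge> 1"
  shows "D2 (shoot c M g s) k - c k * shoot c M g s k / M = g k"
proof -
  obtain m where m: "k = Suc m" using assms by (cases k) auto
  show ?thesis using m by (simp add: D2_def)
qed

theorem lemma10:
  fixes N :: nat and f fx :: "real \<Rightarrow> real \<Rightarrow> real" and x :: "nat \<Rightarrow> real"
  assumes "N \<ge> 2"
    and "continuous_on ({0..1} \<times> UNIV) (\<lambda>(t, y). f t y)"
    and "continuous_on ({0..1} \<times> UNIV) (\<lambda>(t, y). fx t y)"
    and "\<And>t y. t \<in> {0..1} \<Longrightarrow> ((\<lambda>z. f t z) has_real_derivative fx t y) (at y)"
    and "bdd_below ((\<lambda>(t, y). fx t y) ` ({0..1} \<times> UNIV))"
    and "(INF p\<in>{0..1} \<times> UNIV. fx (fst p) (snd p)) > -1"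
    and "x \<in> EN N"
  shows "bij_betw (DN' fx N x) (EN N) (EN N)"
proof -
  define c where "c k = fx (real k / real N) (x k)" for k
  have Npos: "real N > 0" using assms(1) by simp
  have fxgt: "fx t y > -1" if t: "t \<in> {0..1}" for t y
  proof -
    have bb: "bdd_below ((\<lambda>p. fx (fst p) (snd p)) ` ({0..1} \<times> UNIV))"
      using assms(5) by (simp add: case_prod_beta')
    have "(INF p\<in>{0..1} \<times> UNIV. fx (fst p) (snd p)) \<le> fx (fst (t,y)) (snd (t,y))"
      by (rule cINF_lower[OF bb]) (use t in auto)
    then show ?thesis using assms(6) by simp
  qed
  have cgt: "c k > -1" if "1 \<le> k" "k \<le> N - 1" for k
    proof -
    have "real k \<le> real N" using that by simp
    then have "real k / real N \<le> 1" using Npos by (simp add: divide_le_eq_1)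
    moreover have "real k / real N \<ge> 0" by simp
    ultimately show ?thesis unfolding c_def by (intro fxgt) simp
  qed
  have DN'_eq: "DN' fx N x h = (\<lambda>k. if 1 \<le> k \<and> k \<le> N - 1
      then D2 h k - c k * h k / (real N)^2 else 0)" for h
    by (simp add: DN'_def c_def fun_eq_iff)
  have into: "DN' fx N x h \<in> EN N" for h
    unfolding DN'_eq EN_def using assms(1) by auto
  have inj: "inj_on (DN' fx N x) (EN N)"
  proof (rule inj_onI)
    fix h1 h2 assume h1: "h1 \<in> EN N" and h2: "h2 \<in> EN N" and e: "DN' fx N x h1 = DN' fx N x h2"
    define h where "h k = h1 k - h2 k" for k
    have hE: "h \<in> EN N" using h1 h2 by (auto simp: EN_def h_def)
    have "D2 h k - c k * h k / (real N)^2 = 0" if "1 \<le> k" "k \<le> N - 1" for k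
    proof -
      have "D2 h1 k - c k * h1 k / (real N)^2 = D2 h2 k - c k * h2 k / (real N)^2"
        using fun_cong[OF e, of k] that by (simp add: DN'_eq)
      then show ?thesis by (simp add: D2_def h_def algebra_simps diff_divide_distrib)
    qed
    then have "h = (\<lambda>_. 0)" using kernel_zero[of N h c, OF assms(1) hE cgt] by simp
    then show "h1 = h2" by (auto simp: h_def fun_eq_iff)
  qed
  have surj: "EN N \<subseteq> DN' fx N x ` EN N"
  proof
    fix g assume g: "g \<in> EN N"
    define M where "M = (real N)^2"
    define p where "p = shoot c M (\<lambda>_. 0) 1"
    define q where "q = shoot c M g 0"
    have pN: "p N \<noteq> 0"
    proof
      assume pN0: "p N = 0"
      define pt where "pt k = (if k \<le> N then p k else 0)" for k
      have ptE: "pt \<in> EN N" using pN0 by (auto simp: EN_def pt_def p_def)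
      have "D2 pt k - c k * pt k / (real N)^2 = 0" if "1 \<le> k" "k \<le> N - 1" for k
      proof -
        have "D2 pt k = D2 p k" using that by (auto simp: D2_def pt_def)
        then show ?thesis using shoot_eq[of k c M "\<lambda>_. 0" 1] that
          by (simp add: pt_def p_def M_def)
      qed
      then have "pt = (\<lambda>_. 0)" using kernel_zero[of N pt c, OF assms(1) ptE cgt] by simp
      then have "pt 1 = 0" by simp
      moreover have "pt 1 = 1" using assms(1) by (simp add: pt_def p_def del: shoot.simps) (simp add: One_nat_def)
      ultimately show False by simp
    qed
    define s where "s = - q N / p N"
    define u where "u = shoot c M g s"
    define h where "h k = (if k \<le> N then u k else 0)" for k
    have "u N = s * p N + q N" unfolding u_def p_def q_def by (rule shoot_lin)
    also have "\<dots> = 0" unfolding s_def using pN by (simp add: field_simps)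
    finally have uN: "u N = 0" .
    have u0: "u 0 = 0" unfolding u_def by simp
    have hE: "h \<in> EN N" unfolding EN_def h_def using uN u0 by simp
    have "DN' fx N x h = g"
    proof
      fix k
      show "DN' fx N x h k = g k"
      proof (cases "1 \<le> k \<and> k \<le> N - 1")
        case True
        have "D2 h k = D2 u k" using True by (auto simp: D2_def h_def)
        then show ?thesis using shoot_eq[of k c M g s] True
          by (auto simp: DN'_eq h_def u_def M_def)
      next
        case False
        then have "k = 0 \<or> k \<ge> N" using assms(1) by auto
        then have "g k = 0" using g unfolding EN_def by (cases "k = N") auto
        then show ?thesis using False by (auto simp: DN'_eq)
      qed
    qed
    then show "g \<in> DN' fx N x ` EN N" using hE by blast
  qed
  show ?thesis unfolding bij_betw_def using inj into surj by blast
qed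

end
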